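(* Let $\lambda_1,\lambda_2\in\mathbb{C}$ and let $\alpha,\beta\in\mathbb{C}$ with $\alpha+\beta\notin\mathbb{Z}$ and $\alpha\notin\{-1,-2,-3,\dots\}$. On $W=V_{\lambda_1}\otimes V_{\lambda_2}$ (with basis $e_n\otimes f_m$, $n,m\ge 0$, where $\{e_n\}$ is the standard basis of $V_{\lambda_1}$ and $\{f_m\}$ that of $V_{\lambda_2}$) put $H^{(1)}=H\otimes\mathbb{I}$, $H^{(2)}=\mathbb{I}\otimes H$, and let $D=H^{(1)}-H^{(2)}-\lambda_1+\lambda_2+2\alpha+2\beta+2$, a diagonal operator which is invertible. Define operators on $W$ by $$\Delta(H)=H^{(1)}+H^{(2)},$$ $$\Delta(E)=D^{-1}\Big((H^{(1)}-\lambda_1+2\alpha+2\beta+2)(E\otimes\mathbb{I})+(\lambda_2-H^{(2)}+2\alpha+2\beta+2)(\mathbb{I}\otimes E)\Big),$$ $$\Delta(F)=D^{-1}\Big((H^{(1)}-\lambda_1+2\alpha+2)(F\otimes\mathbb{I})+(\lambda_2-H^{(2)}+2\beta)(\mathbb{I}\otimes F)\Big).$$ Then (a) $\Delta(H),\Delta(E),\Delta(F)$ satisfy $[\Delta(H),\Delta(E)]=2\Delta(E)$, $[\Delta(H),\Delta(F)]=-2\Delta(F)$, $[\Delta(E),\Delta(F)]=1$, i.e. they define a representation of the oscillator algebra on $W$; and (b) for all integers $0\le k\le N$, the vectors $w_{k,N}=\sum_{n=0}^N Q_n(k,N)\,e_n\otimes f_{N-n}$ satisfy $\Delta(H)w_{k,N}=(\lambda_1+\lambda_2+2N)w_{k,N}$,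 $\Delta(E)w_{k,N}=w_{k,N+1}$, and $\Delta(F)w_{k,N}=-(N-k)\,w_{k,N-1}$ (with the convention $w_{k,k-1}=0$). In other words, the $Q_n(k,N)$ are the Clebsch–Gordan coefficients realizing, with respect to this tensor product action, vectors of the oscillator-algebra module $V_{\lambda_1+\lambda_2+2k}$ inside $V_{\lambda_1}\otimes V_{\lambda_2}$.
   Context: The oscillator algebra is generated by $H,E,F$ with relations $[H,E]=2E$, $[H,F]=-2F$, $[E,F]=1$. For $\lambda\in\mathbb{C}$, $V_\lambda$ is the module with basis $\{|\lambda,n\rangle: n=0,1,2,\dots\}$ and action $H|\lambda,n\rangle=(\lambda+2n)|\lambda,n\rangle$, $E|\lambda,n\rangle=|\lambda,n+1\rangle$, $F|\lambda,n\rangle=-n|\lambda,n-1\rangle$. Products of operators such as $D^{-1}(\cdots)(E\otimes\mathbb{I})$ mean composition (first apply $E\otimes\mathbb{I}$, then the diagonal operators). The functions $Q_n(k,N)$ (proportional to Hahn polynomials) are $$Q_n(k,N)=\binom{N}{n}\,{}_3F_2\!\left(\begin{matrix}-n,\ n+\alpha+\beta-N+1,\ -k\\ \alpha+1,\ -N\end{matrix}\;\Big|\;1\right),$$ where ${}_3F_2$ is the terminating hypergeometric series $\sum_{j\ge0}\frac{(a_1)_j(a_2)_j(a_3)_j}{j!(b_1)_j(b_2)_j}z^j$ with Pochhammer symbols $(a)_j=a(a+1)\cdots(a+j-1)$ (the sum terminates at $j=\min(n,k)\le N$). *)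

theory Defs
  imports Complex_Main
begin

text \<open>Vectors of W = V_l1 (x) V_l2 are represented by their coefficient functions
  v :: nat * nat => complex, i.e. v = sum of v(n,m) e_n (x) f_m.  Elements of W
  are those with finite support.\<close>

type_synonym tvec = "nat \<times> nat \<Rightarrow> complex"

definition diag :: "(nat \<times> nat \<Rightarrow> complex) \<Rightarrow> tvec \<Rightarrow> tvec" where
  "diag d v = (\<lambda>p. d p * v p)"

definition vadd :: "tvec \<Rightarrow> tvec \<Rightarrow> tvec" where
  "vadd v w = (\<lambda>p. v p + w p)"

definition H1 :: "complex \<Rightarrow> tvec \<Rightarrow> tvec" where
  "H1 l1 = diag (\<lambda>(n,m). l1 + 2 * of_nat n)"
definition H2 :: "complex \<Rightarrow> tvec \<Rightarrow> tvec" where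
  "H2 l2 = diag (\<lambda>(n,m). l2 + 2 * of_nat m)"

text \<open>E (x) I : e_n (x) f_m |-> e_(n+1) (x) f_m ; I (x) E analogously\<close>
definition E1 :: "tvec \<Rightarrow> tvec" where
  "E1 v = (\<lambda>(n,m). if n = 0 then 0 else v (n - 1, m))"
definition E2 :: "tvec \<Rightarrow> tvec" where
  "E2 v = (\<lambda>(n,m). if m = 0 then 0 else v (n, m - 1))"

text \<open>F (x) I : e_n (x) f_m |-> -n e_(n-1) (x) f_m ; I (x) F analogously\<close>
definition F1 :: "tvec \<Rightarrow> tvec" where
  "F1 v = (\<lambda>(n,m). - (of_nat n + 1) * v (n + 1, m))"
definition F2 :: "tvec \<Rightarrow> tvec" where
  "F2 v = (\<lambda>(n,m). - (of_nat m + 1) * v (n, m + 1))"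

definition Dval :: "complex \<Rightarrow> complex \<Rightarrow> complex \<Rightarrow> complex \<Rightarrow> nat \<times> nat \<Rightarrow> complex" where
  "Dval l1 l2 a b = (\<lambda>(n,m). (l1 + 2 * of_nat n) - (l2 + 2 * of_nat m) - l1 + l2 + 2*a + 2*b + 2)"

definition Dinv :: "complex \<Rightarrow> complex \<Rightarrow> complex \<Rightarrow> complex \<Rightarrow> tvec \<Rightarrow> tvec" where
  "Dinv l1 l2 a b = diag (\<lambda>p. 1 / Dval l1 l2 a b p)"

definition DeltaH :: "complex \<Rightarrow> complex \<Rightarrow> tvec \<Rightarrow> tvec" where
  "DeltaH l1 l2 v = vadd (H1 l1 v) (H2 l2 v)"

definition DeltaE :: "complex \<Rightarrow> complex \<Rightarrow> complex \<Rightarrow> complex \<Rightarrow> tvec \<Rightarrow> tvec" where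
  "DeltaE l1 l2 a b v = Dinv l1 l2 a b
     (vadd (diag (\<lambda>(n,m). (l1 + 2 * of_nat n) - l1 + 2*a + 2*b + 2) (E1 v))
           (diag (\<lambda>(n,m). l2 - (l2 + 2 * of_nat m) + 2*a + 2*b + 2) (E2 v)))"

definition DeltaF :: "complex \<Rightarrow> complex \<Rightarrow> complex \<Rightarrow> complex \<Rightarrow> tvec \<Rightarrow> tvec" where
  "DeltaF l1 l2 a b v = Dinv l1 l2 a b
     (vadd (diag (\<lambda>(n,m). (l1 + 2 * of_nat n) - l1 + 2*a + 2) (F1 v))
           (diag (\<lambda>(n,m). l2 - (l2 + 2 * of_nat m) + 2*b) (F2 v)))"

definition commutator :: "(tvec \<Rightarrow> tvec) \<Rightarrow> (tvec \<Rightarrow> tvec) \<Rightarrow> tvec \<Rightarrow> tvec" where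
  "commutator A B v = (\<lambda>p. A (B v) p - B (A v) p)"

definition Q :: "complex \<Rightarrow> complex \<Rightarrow> nat \<Rightarrow> nat \<Rightarrow> nat \<Rightarrow> complex" where
  "Q a b n k N = of_nat (N choose n) *
     (\<Sum>j\<le>min n k. pochhammer (- of_nat n) j * pochhammer (of_nat n + a + b - of_nat N + 1) j
                    * pochhammer (- of_nat k) j
                  / (fact j * pochhammer (a + 1) j * pochhammer (- of_nat N) j))"

definition wvec :: "complex \<Rightarrow> complex \<Rightarrow> nat \<Rightarrow> nat \<Rightarrow> tvec" where
  "wvec a b k N = (\<lambda>(n,m). if n + m = N then Q a b n k N else 0)"

end

theory Submission
  imports Defs
begin


lemma nzD:
  fixes a b :: complex
  assumes ab: "a + b \<notin> \<int>"
  shows "of_int z + (a + b) \<noteq> 0"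
proof
  assume "of_int z + (a + b) = 0"
  then have "a + b = of_int (- z)" by (simp add: algebra_simps eq_neg_iff_add_eq_0)
  then show False using ab by (metis Ints_of_int)
qed

lemma Dval_nz:
  fixes a b :: complex
  assumes ab: "a + b \<notin> \<int>"
  shows "Dval l1 l2 a b (n,m) \<noteq> 0"
proof -
  have h: "complex_of_int (int n - int m + 1) + (a + b) \<noteq> 0" by (rule nzD[OF ab])
  have eq: "Dval l1 l2 a b (n,m) = 2 * (of_int (int n - int m + 1) + (a + b))"
    by (simp add: Dval_def algebra_simps)
  show ?thesis unfolding eq using h by (metis mult_eq_0_iff zero_neq_numeral)
qed

lemma commHE:
  fixes a b :: complex
  assumes ab: "a + b \<notin> \<int>"
  shows "commutator (DeltaH l1 l2) (DeltaE l1 l2 a b) v = (\<lambda>p. 2 * DeltaE l1 l2 a b v p)"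
proof (rule ext, clarify)
  fix n m
  show "commutator (DeltaH l1 l2) (DeltaE l1 l2 a b) v (n,m) = 2 * DeltaE l1 l2 a b v (n,m)"
    using Dval_nz[OF ab, of l1 l2 n m]
    by (cases n; cases m; simp add: commutator_def DeltaH_def DeltaE_def Dinv_def diag_def vadd_def H1_def H2_def E1_def E2_def; simp add: field_simps)
qed

lemma commHF:
  fixes a b :: complex
  assumes ab: "a + b \<notin> \<int>"
  shows "commutator (DeltaH l1 l2) (DeltaF l1 l2 a b) v = (\<lambda>p. - 2 * DeltaF l1 l2 a b v p)"
proof (rule ext, clarify)
  fix n m
  show "commutator (DeltaH l1 l2) (DeltaF l1 l2 a b) v (n,m) = - 2 * DeltaF l1 l2 a b v (n,m)"
    using Dval_nz[OF ab, of l1 l2 n m]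
    by (simp add: commutator_def DeltaH_def DeltaF_def Dinv_def diag_def vadd_def H1_def H2_def F1_def F2_def; simp add: field_simps)
qed

lemma Dval_Suc1: "Dval l1 l2 a b (Suc n, m) = Dval l1 l2 a b (n, m) + 2"
  by (simp add: Dval_def algebra_simps)
lemma Dval_Suc2: "Dval l1 l2 a b (n, Suc m) = Dval l1 l2 a b (n, m) - 2"
  by (simp add: Dval_def algebra_simps)
lemma Dval_pred1: "n \<noteq> 0 \<Longrightarrow> Dval l1 l2 a b (n - 1, m) = Dval l1 l2 a b (n, m) - 2"
  by (cases n) (simp_all add: Dval_def algebra_simps)
lemma Dval_pred2: "m \<noteq> 0 \<Longrightarrow> Dval l1 l2 a b (n, m - 1) = Dval l1 l2 a b (n, m) + 2"
  by (cases m) (simp_all add: Dval_def algebra_simps)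

lemma Dinv_I: "Dinv l1 l2 a b w p = inverse (Dval l1 l2 a b p) * w p"
  by (simp add: Dinv_def diag_def divide_inverse)

lemma DvalI:
  fixes a b :: complex
  assumes ab: "a + b \<notin> \<int>"
  shows "(2 * of_nat n - 2 * of_nat m + 2*a + 2*b + 2) * inverse (Dval l1 l2 a b (n,m)) = 1"
proof -
  have "Dval l1 l2 a b (n,m) = 2 * of_nat n - 2 * of_nat m + 2*a + 2*b + 2" by (simp add: Dval_def)
  then show ?thesis using Dval_nz[OF ab, of l1 l2 n m] by simp
qed

lemma commEF_SS:
  fixes a b :: complex
  assumes ab: "a + b \<notin> \<int>"
  shows "commutator (DeltaE l1 l2 a b) (DeltaF l1 l2 a b) v (Suc n, Suc m) = v (Suc n, Suc m)"
proof -
  note defs = commutator_def DeltaE_def DeltaF_def Dinv_I diag_def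
        vadd_def E1_def E2_def F1_def F2_def
  have h: "(2 * of_nat (Suc n) - 2 * of_nat (Suc m) + 2*a + 2*b + 2) * inverse (Dval l1 l2 a b (Suc n, Suc m)) = 1"
     "(2 * of_nat n - 2 * of_nat (Suc m) + 2*a + 2*b + 2) * inverse (Dval l1 l2 a b (n, Suc m)) = 1"
     "(2 * of_nat (Suc n) - 2 * of_nat m + 2*a + 2*b + 2) * inverse (Dval l1 l2 a b (Suc n, m)) = 1"
     "(2 * of_nat (Suc (Suc n)) - 2 * of_nat (Suc m) + 2*a + 2*b + 2) * inverse (Dval l1 l2 a b (Suc (Suc n), Suc m)) = 1"
     "(2 * of_nat (Suc n) - 2 * of_nat (Suc (Suc m)) + 2*a + 2*b + 2) * inverse (Dval l1 l2 a b (Suc n, Suc (Suc m))) = 1"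
    by (rule DvalI[OF ab])+
  show ?thesis
    apply (simp add: defs del: of_nat_Suc)
    using h apply (simp only: of_nat_Suc)
    apply algebra
    done
qed

lemma commEF_0S:
  fixes a b :: complex
  assumes ab: "a + b \<notin> \<int>"
  shows "commutator (DeltaE l1 l2 a b) (DeltaF l1 l2 a b) v (0, Suc m) = v (0, Suc m)"
proof -
  note defs = commutator_def DeltaE_def DeltaF_def Dinv_I diag_def
        vadd_def E1_def E2_def F1_def F2_def
  have h: "(2 * of_nat (0) - 2 * of_nat (Suc m) + 2*a + 2*b + 2) * inverse (Dval l1 l2 a b (0, Suc m)) = 1"
     "(2 * of_nat (Suc 0) - 2 * of_nat (Suc m) + 2*a + 2*b + 2) * inverse (Dval l1 l2 a b (Suc 0, Suc m)) = 1"
     "(2 * of_nat (0) - 2 * of_nat (Suc (Suc m)) + 2*a + 2*b + 2) * inverse (Dval l1 l2 a b (0, Suc (Suc m))) = 1"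
     "(2 * of_nat (0) - 2 * of_nat (m) + 2*a + 2*b + 2) * inverse (Dval l1 l2 a b (0, m)) = 1"
    by (rule DvalI[OF ab])+
  show ?thesis
    apply (simp add: defs del: of_nat_Suc)
    using h apply (simp only: of_nat_Suc of_nat_0)
    apply algebra
    done
qed

lemma commEF_S0:
  fixes a b :: complex
  assumes ab: "a + b \<notin> \<int>"
  shows "commutator (DeltaE l1 l2 a b) (DeltaF l1 l2 a b) v (Suc n, 0) = v (Suc n, 0)"
proof -
  note defs = commutator_def DeltaE_def DeltaF_def Dinv_I diag_def
        vadd_def E1_def E2_def F1_def F2_def
  have h: "(2 * of_nat (Suc n) - 2 * of_nat (0) + 2*a + 2*b + 2) * inverse (Dval l1 l2 a b (Suc n, 0)) = 1"
     "(2 * of_nat (n) - 2 * of_nat (0) + 2*a + 2*b + 2) * inverse (Dval l1 l2 a b (n, 0)) = 1"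
     "(2 * of_nat (Suc (Suc n)) - 2 * of_nat (0) + 2*a + 2*b + 2) * inverse (Dval l1 l2 a b (Suc (Suc n), 0)) = 1"
     "(2 * of_nat (Suc n) - 2 * of_nat (Suc 0) + 2*a + 2*b + 2) * inverse (Dval l1 l2 a b (Suc n, Suc 0)) = 1"
    by (rule DvalI[OF ab])+
  show ?thesis
    apply (simp add: defs del: of_nat_Suc)
    using h apply (simp only: of_nat_Suc of_nat_0)
    apply algebra
    done
qed

lemma commEF_00:
  fixes a b :: complex
  assumes ab: "a + b \<notin> \<int>"
  shows "commutator (DeltaE l1 l2 a b) (DeltaF l1 l2 a b) v (0, 0) = v (0, 0)"
proof -
  note defs = commutator_def DeltaE_def DeltaF_def Dinv_I diag_def
        vadd_def E1_def E2_def F1_def F2_def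
  have h: "(2 * of_nat (0) - 2 * of_nat (0) + 2*a + 2*b + 2) * inverse (Dval l1 l2 a b (0, 0)) = 1"
     "(2 * of_nat (Suc 0) - 2 * of_nat (0) + 2*a + 2*b + 2) * inverse (Dval l1 l2 a b (Suc 0, 0)) = 1"
     "(2 * of_nat (0) - 2 * of_nat (Suc 0) + 2*a + 2*b + 2) * inverse (Dval l1 l2 a b (0, Suc 0)) = 1"
    by (rule DvalI[OF ab])+
  show ?thesis
    apply (simp add: defs del: of_nat_Suc)
    using h apply (simp only: of_nat_Suc of_nat_0)
    apply algebra
    done
qed

lemma commEF:
  fixes a b :: complex
  assumes ab: "a + b \<notin> \<int>"
  shows "commutator (DeltaE l1 l2 a b) (DeltaF l1 l2 a b) v = v"
proof (rule ext, clarify)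
  fix n m
  show "commutator (DeltaE l1 l2 a b) (DeltaF l1 l2 a b) v (n,m) = v (n,m)"
    by (cases n; cases m) (simp_all add: commEF_00[OF ab] commEF_0S[OF ab] commEF_S0[OF ab] commEF_SS[OF ab])
qed



definition Bt :: "complex \<Rightarrow> complex \<Rightarrow> nat \<Rightarrow> nat \<Rightarrow> nat \<Rightarrow> complex" where
  "Bt a b j n N = (if j \<le> n then of_nat ((N - j) choose (n - j)) * pochhammer (of_nat n + a + b - of_nat N + 1) j else 0)"

definition P :: "complex \<Rightarrow> complex \<Rightarrow> nat \<Rightarrow> nat \<Rightarrow> nat \<Rightarrow> complex" where
  "P a b n k N = (\<Sum>j\<le>N. (-1)^j * of_nat (k choose j) * Bt a b j n N / pochhammer (a+1) j)"

lemma poch_neg_nat: "pochhammer (- of_nat n :: complex) j = (-1)^j * fact j * of_nat (n choose j)"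
proof -
  have "of_nat (n choose j) = ((-1)^j * pochhammer (- of_nat n) j / fact j :: complex)"
    by (simp add: binomial_gbinomial gbinomial_pochhammer)
  then have "(-1)^j * fact j * (of_nat (n choose j) :: complex) = ((-1)^j * (-1)^j) * pochhammer (- of_nat n) j"
    by simp
  also have "\<dots> = pochhammer (- of_nat n) j" by (simp flip: power_mult_distrib)
  finally show ?thesis by simp
qed

lemma Q_term:
  fixes a b :: complex
  assumes "j \<le> n" "j \<le> k" "n \<le> N"
  shows "of_nat (N choose n) * (pochhammer (- of_nat n) j * pochhammer (of_nat n + a + b - of_nat N + 1) j
                    * pochhammer (- of_nat k) j
                  / (fact j * pochhammer (a + 1) j * pochhammer (- of_nat N) j))
       = (-1)^j * of_nat (k choose j) * Bt a b j n N / pochhammer (a+1) j"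
proof -
  have cm: "(N choose n) * (n choose j) = (N choose j) * ((N - j) choose (n - j))"
    using choose_mult[of j n N] assms by simp
  have cm': "of_nat (N choose n) * of_nat (n choose j) = (of_nat (N choose j) * of_nat ((N - j) choose (n - j)) :: complex)"
    using arg_cong[OF cm, of "of_nat :: nat \<Rightarrow> complex"] by simp
  have nz: "of_nat (N choose j) \<noteq> (0::complex)" using assms by simp
  have pw: "((-1::complex)^j) * (-1)^j = 1" by (simp flip: power_mult_distrib)
  show ?thesis
  proof (cases "pochhammer (a + 1) j = 0")
    case True
    then show ?thesis by simp
  next
    case False
    show ?thesis
      unfolding poch_neg_nat Bt_def using assms nz False
      apply (simp add: field_simps)
      using cm' by blast
  qed
qed

lemma Bt_big: "N < n \<Longrightarrow> j \<le> N \<Longrightarrow> Bt a b j n N = 0"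
  using diff_less_mono[of N n j] by (simp add: Bt_def)

lemma Q_P:
  assumes "k \<le> N"
  shows "Q a b n k N = P a b n k N"
proof (cases "n \<le> N")
  case True
  have "Q a b n k N = (\<Sum>j\<le>min n k. of_nat (N choose n) * (pochhammer (- of_nat n) j * pochhammer (of_nat n + a + b - of_nat N + 1) j
                    * pochhammer (- of_nat k) j
                  / (fact j * pochhammer (a + 1) j * pochhammer (- of_nat N) j)))"
    unfolding Q_def by (simp add: sum_distrib_left)
  also have "\<dots> = (\<Sum>j\<le>min n k. (-1)^j * of_nat (k choose j) * Bt a b j n N / pochhammer (a+1) j)"
    apply (rule sum.cong[OF refl])
    apply (rule Q_term)
    using True by auto
  also have "\<dots> = P a b n k N"
    unfolding P_def
    by (rule sum.mono_neutral_left) (use True assms in \<open>auto simp: Bt_def not_le\<close>)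
  finally show ?thesis .
next
  case False
  then show ?thesis by (simp add: Q_def P_def Bt_big)
qed

lemma poch_shift: "y * pochhammer (y + 1) j = (y + of_nat j) * pochhammer y j"
  by (metis pochhammer_rec pochhammer_rec')

lemma E_alg:
  fixes y Py Py1 C1 C2 C3 jj pp qq NN nn a b :: complex
  assumes "y * Py1 = (y + jj) * Py" "(qq + 1) * C2 = (pp - qq) * C1" "C3 = C1 + C2"
    "NN = pp + jj" "nn = qq + jj" "y = nn + a + b - NN + 1"
  shows "(2*nn + 2*(a+b) + 4) * (C1*Py) + (2*(a+b) + 2 - 2*(NN - nn)) * (C2*Py1)
       = (2*nn + 4 - 2*(NN - nn) + 2*(a+b)) * (C3*Py)"
  using assms by algebra

lemma E_term:
  fixes a b :: complex
  assumes nN: "n \<le> N"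
  shows "(2*of_nat n + 2*(a+b) + 4) * Bt a b j n N + (2*(a+b) + 2 - 2*(of_nat N - of_nat n)) * Bt a b j (Suc n) N
       = (2*of_nat n + 4 - 2*(of_nat N - of_nat n) + 2*(a+b)) * Bt a b j (Suc n) (Suc N)"
proof -
  define y where "y = of_nat n + a + b - of_nat N + 1"
  have e1: "of_nat (Suc n) + a + b - of_nat N + 1 = y + 1" unfolding y_def by (simp add: algebra_simps)
  have e2: "of_nat (Suc n) + a + b - of_nat (Suc N) + 1 = y" unfolding y_def by (simp add: algebra_simps)
  have rec: "y * pochhammer (y + 1) j = (y + of_nat j) * pochhammer y j" by (rule poch_shift)
  show ?thesis
  proof (cases "j \<le> n")
    case True
    define p where "p = N - j"
    define q where "q = n - j"
    have sq: "Suc n - j = Suc q" "Suc N - j = Suc p" using True nN unfolding p_def q_def by auto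
    have bn: "Suc q * (p choose Suc q) = (p - q) * (p choose q)"
      by (metis binomial_absorb_comp binomial_absorption)
    have bn': "(of_nat q + 1) * of_nat (p choose Suc q) = (of_nat p - of_nat q) * (of_nat (p choose q) :: complex)"
    proof -
      have qp: "q \<le> p" using True nN unfolding p_def q_def by auto
      show ?thesis using arg_cong[OF bn, of "of_nat :: nat \<Rightarrow> complex"] qp
        by (simp add: of_nat_diff algebra_simps)
    qed
    have pa: "Suc p choose Suc q = (p choose q) + (p choose Suc q)" by simp
    have pa': "of_nat (Suc p choose Suc q) = of_nat (p choose q) + (of_nat (p choose Suc q) :: complex)"
      unfolding pa by simp
    have NN: "(of_nat N :: complex) = of_nat p + of_nat j" "(of_nat n :: complex) = of_nat q + of_nat j"
      using True nN unfolding p_def q_def by (simp_all add: of_nat_diff)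
    have "Bt a b j n N = of_nat (p choose q) * pochhammer y j"
      using True unfolding Bt_def y_def p_def q_def by simp
    moreover have "Bt a b j (Suc n) N = of_nat (p choose Suc q) * pochhammer (y + 1) j"
      using True sq unfolding Bt_def p_def e1 by simp
    moreover have "Bt a b j (Suc n) (Suc N) = of_nat (Suc p choose Suc q) * pochhammer y j"
      using True sq unfolding Bt_def e2 by simp
    ultimately show ?thesis
      using E_alg[OF rec bn' pa' NN y_def] by simp
  next
    case False
    show ?thesis
    proof (cases "j = Suc n")
      case True
      have h1: "Bt a b j n N = 0" using False by (simp add: Bt_def)
      have h2: "Bt a b j (Suc n) N = pochhammer (y + 1) j"
        using True unfolding Bt_def e1 by simp
      have h3: "Bt a b j (Suc n) (Suc N) = pochhammer y j"
        using True unfolding Bt_def e2 by simp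
      have oj: "of_nat j = (of_nat n + 1 :: complex)" using True by simp
      show ?thesis using h1 h2 h3 rec oj y_def by algebra
    next
      case False2: False
      then show ?thesis using False by (simp add: Bt_def)
    qed
  qed
qed

lemma ofnat1_nz: "(of_nat x + 1 :: complex) \<noteq> 0"
proof -
  have eq: "(of_nat x + 1 :: complex) = of_nat (Suc x)" by simp
  show ?thesis by (simp only: eq of_nat_eq_0_iff nat.distinct(1) not_False_eq_True)
qed

definition R2 :: "complex \<Rightarrow> complex \<Rightarrow> nat \<Rightarrow> nat \<Rightarrow> nat \<Rightarrow> complex" where
  "R2 a b j n M = (case j of 0 \<Rightarrow> 0 | Suc i \<Rightarrow> of_nat (Suc i) * (a + of_nat (Suc i)) * Bt a b i n M)"

lemma F_term:
  fixes a b :: complex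
  assumes nM: "n \<le> M"
  shows "- (2*of_nat n + 2*a + 2) * (of_nat n + 1) * Bt a b j (Suc n) (Suc M)
         - (2*b - 2*(of_nat M - of_nat n)) * (of_nat M - of_nat n + 1) * Bt a b j n (Suc M)
       = - (2*(2*of_nat n - of_nat (Suc M) + a + b + 2)) * ((of_nat (Suc M) - of_nat j) * Bt a b j n M + R2 a b j n M)"
proof -
  define z where "z = of_nat n + a + b - of_nat (Suc M) + 1"
  have e1: "of_nat (Suc n) + a + b - of_nat (Suc M) + 1 = z + 1" unfolding z_def by (simp add: algebra_simps)
  have e2: "of_nat n + a + b - of_nat M + 1 = z + 1" unfolding z_def by (simp add: algebra_simps)
  have e3: "of_nat n + a + b - of_nat (Suc M) + 1 = z" unfolding z_def by simp
  show ?thesis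
  proof (cases j)
    case 0
    have b1: "Suc n * (Suc M choose Suc n) = Suc M * (M choose n)" by (rule Suc_times_binomial)
    have b2: "(Suc M - n) * (Suc M choose n) = Suc M * (M choose n)"
      using binomial_absorb_comp[of "Suc M" n] by simp
    have b1': "(of_nat n + 1) * of_nat (Suc M choose Suc n) = (of_nat M + 1) * (of_nat (M choose n) :: complex)"
      using arg_cong[OF b1, of "of_nat :: nat \<Rightarrow> complex"] by (simp add: algebra_simps)
    have b2': "(of_nat M - of_nat n + 1) * of_nat (Suc M choose n) = (of_nat M + 1) * (of_nat (M choose n) :: complex)"
    proof -
      have od: "of_nat (Suc M - n) = (of_nat M - of_nat n + 1 :: complex)" using nM by (simp add: of_nat_diff)
      show ?thesis using arg_cong[OF b2, of "of_nat :: nat \<Rightarrow> complex"] unfolding of_nat_mult od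
        by simp
    qed
    have h1: "Bt a b j (Suc n) (Suc M) = of_nat (Suc M choose Suc n)" using 0 by (simp add: Bt_def)
    have h2: "Bt a b j n (Suc M) = of_nat (Suc M choose n)" using 0 by (simp add: Bt_def)
    have h3: "Bt a b j n M = of_nat (M choose n)" using 0 by (simp add: Bt_def)
    have h4: "R2 a b j n M = 0" using 0 by (simp add: R2_def)
    have oj: "(of_nat j :: complex) = 0" using 0 by simp
    have alg: "\<And>C1 C0 X nn MM :: complex. (nn + 1) * C1 = (MM + 1) * X \<Longrightarrow> (MM - nn + 1) * C0 = (MM + 1) * X \<Longrightarrow>
       - (2*nn + 2*a + 2) * (nn + 1) * C1 - (2*b - 2*(MM - nn)) * (MM - nn + 1) * C0
       = - (2*(2*nn - (MM + 1) + a + b + 2)) * ((MM + 1 - 0) * X + 0)"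
      by algebra
    show ?thesis unfolding h1 h2 h3 h4 oj of_nat_Suc using alg[OF b1' b2'] by (simp add: algebra_simps)
  next
    case (Suc i)
    show ?thesis
    proof (cases "j \<le> n")
      case True
      define p where "p = M - j"
      define q where "q = n - j"
      have qp: "q \<le> p" "j \<le> n" "n \<le> M" using True nM unfolding p_def q_def by auto
      have s1: "Suc M - j = Suc p" "Suc n - j = Suc q" "M - i = Suc p" "n - i = Suc q" "n - j = q" "M - j = p"
        using True nM Suc unfolding p_def q_def by auto
      define X where "X = (of_nat (p choose q) :: complex)"
      define W where "W = pochhammer (z + 1) i"
      define iq where "iq = 1 / (of_nat q + 1 :: complex)"
      define ip where "ip = 1 / (of_nat p - of_nat q + 1 :: complex)"
      have qnz: "(of_nat q + 1 :: complex) \<noteq> 0"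
      proof -
        have eq: "(of_nat q + 1 :: complex) = of_nat (Suc q)" by simp
        show ?thesis by (simp only: eq of_nat_eq_0_iff nat.distinct(1) not_False_eq_True)
      qed
      have iq1: "(of_nat q + 1) * iq = 1" unfolding iq_def using qnz by simp
      have ipnz: "(of_nat p - of_nat q + 1 :: complex) \<noteq> 0"
      proof -
        have "(of_nat p - of_nat q + 1 :: complex) = of_nat (p - q) + 1" using qp by (simp add: of_nat_diff)
        then show ?thesis using ofnat1_nz by simp
      qed
      have ip1: "(of_nat p - of_nat q + 1) * ip = 1" unfolding ip_def using ipnz by simp
      have b1: "Suc q * (Suc p choose Suc q) = Suc p * (p choose q)" by (rule Suc_times_binomial)
      have b2: "(Suc p - q) * (Suc p choose q) = Suc p * (p choose q)"
        using binomial_absorb_comp[of "Suc p" q] by simp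
      have C1: "of_nat (Suc p choose Suc q) = (of_nat p + 1) * X * iq"
      proof -
        have "(of_nat q + 1) * of_nat (Suc p choose Suc q) = (of_nat p + 1) * (X :: complex)"
          using arg_cong[OF b1, of "of_nat :: nat \<Rightarrow> complex"] unfolding X_def by (simp add: algebra_simps)
        then show ?thesis unfolding iq_def using qnz by (simp add: field_simps)
      qed
      have C0: "of_nat (Suc p choose q) = (of_nat p + 1) * X * ip"
      proof -
        have "(of_nat p - of_nat q + 1) * of_nat (Suc p choose q) = (of_nat p + 1) * (X :: complex)"
        proof -
          have od: "of_nat (Suc p - q) = (of_nat p - of_nat q + 1 :: complex)" using qp by (simp add: of_nat_diff)
          show ?thesis using arg_cong[OF b2, of "of_nat :: nat \<Rightarrow> complex"] unfolding of_nat_mult od X_def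
            by simp
        qed
        then show ?thesis unfolding ip_def using ipnz by (simp add: field_simps)
      qed
      have P1: "pochhammer (z + 1) j = W * (z + 1 + of_nat i)" unfolding W_def Suc by (simp add: pochhammer_Suc)
      have P0: "pochhammer z j = z * W" unfolding W_def Suc by (simp add: pochhammer_rec)
      have h1: "Bt a b j (Suc n) (Suc M) = of_nat (Suc p choose Suc q) * pochhammer (z + 1) j"
        using True s1 unfolding Bt_def e1 by simp
      have h2: "Bt a b j n (Suc M) = of_nat (Suc p choose q) * pochhammer z j"
        using True s1 unfolding Bt_def e3 by simp
      have h3: "Bt a b j n M = X * pochhammer (z + 1) j"
        using True s1 unfolding Bt_def e2 X_def by simp
      have h4: "R2 a b j n M = of_nat j * (a + of_nat j) * (of_nat (Suc p choose Suc q) * W)"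
        using True s1 Suc unfolding R2_def Bt_def e2 W_def by simp
      have NN: "(of_nat M :: complex) = of_nat p + of_nat j" "(of_nat n :: complex) = of_nat q + of_nat j"
        "(of_nat j :: complex) = of_nat i + 1"
        using qp Suc unfolding p_def q_def by (simp_all add: of_nat_diff)
      show ?thesis using h1 h2 h3 h4 C1 C0 P1 P0 NN iq1 ip1 z_def by (simp only: of_nat_Suc) algebra
    next
      case False
      show ?thesis
      proof (cases "i = n")
        case True
        define W where "W = pochhammer (z + 1) n"
        have h1: "Bt a b j (Suc n) (Suc M) = W * (z + 1 + of_nat n)"
          using True Suc unfolding Bt_def e1 W_def by (simp add: pochhammer_Suc)
        have h2: "Bt a b j n (Suc M) = 0" "Bt a b j n M = 0" using False by (simp_all add: Bt_def)
        have h4: "R2 a b j n M = of_nat j * (a + of_nat j) * W"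
          using True Suc unfolding R2_def Bt_def e2 W_def by simp
        have oj: "(of_nat j :: complex) = of_nat n + 1" using True Suc by simp
        have oM: "(of_nat (Suc M) :: complex) = of_nat M + 1" by simp
        show ?thesis unfolding h1 h2 h4 using oj z_def oM by algebra
      next
        case False2: False
        have "i > n" using False2 False Suc by auto
        then show ?thesis using False Suc by (simp add: Bt_def R2_def)
      qed
    qed
  qed
qed

definition cf :: "complex \<Rightarrow> nat \<Rightarrow> nat \<Rightarrow> complex" where
  "cf a k j = (-1)^j * of_nat (k choose j) / pochhammer (a+1) j"

lemma P_alt: "P a b n k N = (\<Sum>j\<le>N. cf a k j * Bt a b j n N)"
  unfolding P_def cf_def by (simp add: field_simps)

lemma binom_kj: "(of_nat k - of_nat j) * of_nat (k choose j) = (of_nat j + 1) * (of_nat (k choose Suc j) :: complex)"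
proof (cases "j \<le> k")
  case True
  have "(k - j) * (k choose j) = Suc j * (k choose Suc j)"
    by (metis binomial_absorb_comp binomial_absorption)
  from arg_cong[OF this, of "of_nat :: nat \<Rightarrow> complex"] True show ?thesis
    by (simp add: of_nat_diff algebra_simps)
next
  case False
  then have "k choose j = 0" "k choose Suc j = 0" by simp_all
  then show ?thesis by (simp del: binomial_eq_0_iff)
qed

lemma E_P:
  fixes a b :: complex
  assumes kN: "k \<le> N" and nN: "n \<le> N"
  shows "(2*of_nat n + 2*(a+b) + 4) * P a b n k N + (2*(a+b) + 2 - 2*(of_nat N - of_nat n)) * P a b (Suc n) k N
       = (2*of_nat n + 4 - 2*(of_nat N - of_nat n) + 2*(a+b)) * P a b (Suc n) k (Suc N)"
proof -
  have last: "cf a k (Suc N) = 0" using kN by (simp add: cf_def)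
  have "(2*of_nat n + 2*(a+b) + 4) * P a b n k N + (2*(a+b) + 2 - 2*(of_nat N - of_nat n)) * P a b (Suc n) k N
     = (\<Sum>j\<le>N. cf a k j * ((2*of_nat n + 2*(a+b) + 4) * Bt a b j n N + (2*(a+b) + 2 - 2*(of_nat N - of_nat n)) * Bt a b j (Suc n) N))"
    unfolding P_alt by (simp add: sum_distrib_left sum.distrib sum_subtractf ring_distribs mult_ac)
  also have "\<dots> = (\<Sum>j\<le>N. cf a k j * ((2*of_nat n + 4 - 2*(of_nat N - of_nat n) + 2*(a+b)) * Bt a b j (Suc n) (Suc N)))"
    by (rule sum.cong[OF refl]) (simp only: E_term[OF nN])
  also have "\<dots> = (\<Sum>j\<le>N. (2*of_nat n + 4 - 2*(of_nat N - of_nat n) + 2*(a+b)) * (cf a k j * Bt a b j (Suc n) (Suc N)))"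
    by (rule sum.cong[OF refl]) (rule mult.left_commute)
  also have "\<dots> = (2*of_nat n + 4 - 2*(of_nat N - of_nat n) + 2*(a+b)) * (\<Sum>j\<le>N. cf a k j * Bt a b j (Suc n) (Suc N))"
    by (rule sum_distrib_left[symmetric])
  also have "\<dots> = (2*of_nat n + 4 - 2*(of_nat N - of_nat n) + 2*(a+b)) * P a b (Suc n) k (Suc N)"
    unfolding P_alt by (simp add: last)
  finally show ?thesis .
qed

lemma cfR_alg:
  fixes x y C J B :: complex
  assumes "x \<noteq> 0" "y \<noteq> 0"
  shows "(-1)^(Suc j) * C / (x * y) * (J * y * B) = - ((-1)^j * (J * C) / x) * B"
  using assms by (simp add: field_simps)

lemma cfR:
  fixes a b :: complex
  assumes nz: "a + 1 + of_nat j \<noteq> 0"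
  shows "cf a k (Suc j) * R2 a b (Suc j) n M = - ((-1)^j * ((of_nat j + 1) * of_nat (k choose Suc j)) / pochhammer (a+1) j) * Bt a b j n M"
proof (cases "pochhammer (a+1) j = 0")
  case True
  then show ?thesis by (simp add: cf_def R2_def pochhammer_Suc)
next
  case False
  have e1: "pochhammer (a+1) (Suc j) = pochhammer (a+1) j * (a + 1 + of_nat j)" by (simp add: pochhammer_Suc)
  have e2: "a + of_nat (Suc j) = a + 1 + of_nat j" by simp
  have e3: "(of_nat (Suc j) :: complex) = of_nat j + 1" by simp
  show ?thesis unfolding cf_def R2_def nat.case e1 unfolding e2 unfolding e3
    by (rule cfR_alg[OF False nz])
qed

lemma comb_term:
  fixes a :: complex
  shows "cf a k j * ((of_nat (Suc M) - of_nat j) * B) + (- ((-1)^j * ((of_nat j + 1) * of_nat (k choose Suc j)) / pochhammer (a+1) j) * B)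
     = (of_nat (Suc M) - of_nat k) * (cf a k j * B)"
proof (cases "pochhammer (a+1) j = 0")
  case True
  then show ?thesis by (simp add: cf_def)
next
  case False
  show ?thesis
  unfolding binom_kj[symmetric] cf_def using False by (simp add: field_simps)
qed

lemma F_P:
  fixes a b :: complex
  assumes kN: "k \<le> Suc M" and nM: "n \<le> M" and a: "\<forall>j::nat. a \<noteq> - (of_nat j + 1)"
  shows "- (2*of_nat n + 2*a + 2) * (of_nat n + 1) * P a b (Suc n) k (Suc M)
         - (2*b - 2*(of_nat M - of_nat n)) * (of_nat M - of_nat n + 1) * P a b n k (Suc M)
       = - (2*(2*of_nat n - of_nat (Suc M) + a + b + 2)) * ((of_nat (Suc M) - of_nat k) * P a b n k M)"
proof -
  define D where "D = - (2*(2*of_nat n - of_nat (Suc M) + a + b + 2))"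
  have nzj: "a + 1 + of_nat j \<noteq> 0" for j :: nat
  proof
    assume "a + 1 + of_nat j = 0"
    then have "a = - (of_nat j + 1)" by (simp add: algebra_simps eq_neg_iff_add_eq_0)
    then show False using a by blast
  qed
  have "- (2*of_nat n + 2*a + 2) * (of_nat n + 1) * P a b (Suc n) k (Suc M)
         - (2*b - 2*(of_nat M - of_nat n)) * (of_nat M - of_nat n + 1) * P a b n k (Suc M)
      = (\<Sum>j\<le>Suc M. cf a k j * (- (2*of_nat n + 2*a + 2) * (of_nat n + 1) * Bt a b j (Suc n) (Suc M)
         - (2*b - 2*(of_nat M - of_nat n)) * (of_nat M - of_nat n + 1) * Bt a b j n (Suc M)))"
    unfolding P_alt by (simp add: sum_distrib_left sum.distrib sum_subtractf ring_distribs mult_ac)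
  also have "\<dots> = (\<Sum>j\<le>Suc M. cf a k j * (D * ((of_nat (Suc M) - of_nat j) * Bt a b j n M + R2 a b j n M)))"
    unfolding D_def by (rule sum.cong[OF refl]) (simp only: F_term[OF nM])
  also have "\<dots> = D * ((\<Sum>j\<le>Suc M. cf a k j * ((of_nat (Suc M) - of_nat j) * Bt a b j n M))
                      + (\<Sum>j\<le>Suc M. cf a k j * R2 a b j n M))"
    by (simp add: sum_distrib_left sum.distrib ring_distribs mult_ac)
  also have "(\<Sum>j\<le>Suc M. cf a k j * ((of_nat (Suc M) - of_nat j) * Bt a b j n M))
           = (\<Sum>j\<le>M. cf a k j * ((of_nat (Suc M) - of_nat j) * Bt a b j n M))"
    by (simp only: sum.atMost_Suc) simp
  also have "(\<Sum>j\<le>Suc M. cf a k j * R2 a b j n M)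
           = (\<Sum>j\<le>M. - ((-1)^j * ((of_nat j + 1) * of_nat (k choose Suc j)) / pochhammer (a+1) j) * Bt a b j n M)"
    by (simp only: sum.atMost_Suc_shift cfR[OF nzj]) (simp add: R2_def)
  also have "(\<Sum>j\<le>M. cf a k j * ((of_nat (Suc M) - of_nat j) * Bt a b j n M))
       + (\<Sum>j\<le>M. - ((-1)^j * ((of_nat j + 1) * of_nat (k choose Suc j)) / pochhammer (a+1) j) * Bt a b j n M)
       = (\<Sum>j\<le>M. (of_nat (Suc M) - of_nat k) * (cf a k j * Bt a b j n M))"
    by (simp only: sum.distrib[symmetric] comb_term)
  also have "\<dots> = (of_nat (Suc M) - of_nat k) * P a b n k M"
    unfolding P_alt by (rule sum_distrib_left[symmetric])
  finally show ?thesis unfolding D_def by (simp only: mult.assoc)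
qed

lemma Dval_nzB:
  fixes a b :: complex
  assumes ab: "a + b \<notin> \<int>"
  shows "Dval l1 l2 a b (n,m) \<noteq> 0"
proof -
  have h: "complex_of_int (int n - int m + 1) + (a + b) \<noteq> 0"
  proof
    assume "complex_of_int (int n - int m + 1) + (a + b) = 0"
    then have "a + b = of_int (- (int n - int m + 1))" by (simp add: algebra_simps eq_neg_iff_add_eq_0)
    then show False using ab by (metis Ints_of_int)
  qed
  have eq: "Dval l1 l2 a b (n,m) = 2 * (of_int (int n - int m + 1) + (a + b))"
    by (simp add: Dval_def algebra_simps)
  show ?thesis unfolding eq using h by (metis mult_eq_0_iff zero_neq_numeral)
qed

lemma DeltaE_at: "DeltaE l1 l2 a b v (n,m) = 1 / Dval l1 l2 a b (n,m) *
   ((2*of_nat n + 2*a + 2*b + 2) * (if n = 0 then 0 else v (n-1,m))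
    + (2*a + 2*b + 2 - 2*of_nat m) * (if m = 0 then 0 else v (n, m-1)))"
  by (simp add: DeltaE_def Dinv_def diag_def vadd_def E1_def E2_def)

lemma DeltaF_at: "DeltaF l1 l2 a b v (n,m) = 1 / Dval l1 l2 a b (n,m) *
   ((2*of_nat n + 2*a + 2) * (- (of_nat n + 1) * v (Suc n,m))
    + (2*b - 2*of_nat m) * (- (of_nat m + 1) * v (n, Suc m)))"
  by (simp add: DeltaF_def Dinv_def diag_def vadd_def F1_def F2_def)

lemma Q0: "Q a b 0 k N = 1"
  by (simp add: Q_def)

lemma Q_big: "N < n \<Longrightarrow> Q a b n k N = 0"
  by (simp add: Q_def)

lemma wH: "DeltaH l1 l2 (wvec a b k N) = (\<lambda>p. (l1 + l2 + 2 * of_nat N) * wvec a b k N p)"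
proof (rule ext, clarify)
  fix n m
  show "DeltaH l1 l2 (wvec a b k N) (n,m) = (l1 + l2 + 2 * of_nat N) * wvec a b k N (n,m)"
  proof (cases "n + m = N")
    case True
    then have "(of_nat N :: complex) = of_nat n + of_nat m" by (metis of_nat_add)
    then show ?thesis using True by (simp add: DeltaH_def vadd_def H1_def H2_def diag_def wvec_def algebra_simps)
  next
    case False
    then show ?thesis by (simp add: DeltaH_def vadd_def H1_def H2_def diag_def wvec_def)
  qed
qed

lemma wE:
  fixes a b :: complex
  assumes ab: "a + b \<notin> \<int>" and kN: "k \<le> N"
  shows "DeltaE l1 l2 a b (wvec a b k N) = wvec a b k (N + 1)"
proof (rule ext, clarify)
  fix n m
  have Dnz: "Dval l1 l2 a b (n,m) \<noteq> 0" by (rule Dval_nzB[OF ab])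
  show "DeltaE l1 l2 a b (wvec a b k N) (n,m) = wvec a b k (N + 1) (n,m)"
  proof (cases n)
    case 0
    show ?thesis
    proof (cases "m = Suc N")
      case True
      have "Dval l1 l2 a b (n,m) = 2*a + 2*b + 2 - 2*of_nat m" using 0 by (simp add: Dval_def)
      then show ?thesis using 0 True Dnz by (simp add: DeltaE_at wvec_def Q0)
    next
      case False
      then show ?thesis using 0 by (auto simp: DeltaE_at wvec_def)
    qed
  next
    case (Suc n')
    show ?thesis
    proof (cases "n' + m = N")
      case True
      have nN: "n' \<le> N" using True by simp
      have mN: "(of_nat m :: complex) = of_nat N - of_nat n'" using True by (simp flip: True)
      have q2: "(if m = 0 then 0 else wvec a b k N (Suc n', m - 1)) = Q a b (Suc n') k N"
        using True by (auto simp: wvec_def Q_big)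
      have EP: "(2*of_nat n' + 2*(a+b) + 4) * Q a b n' k N + (2*(a+b) + 2 - 2*(of_nat N - of_nat n')) * Q a b (Suc n') k N
       = (2*of_nat n' + 4 - 2*(of_nat N - of_nat n') + 2*(a+b)) * Q a b (Suc n') k (Suc N)"
        using E_P[OF kN nN] kN by (simp add: Q_P)
      have NN: "(of_nat N :: complex) = of_nat n' + of_nat m" using True by (simp flip: True)
      have Dv: "Dval l1 l2 a b (n,m) = 2*of_nat n' + 4 - 2*(of_nat N - of_nat n') + 2*(a+b)"
        using Suc NN by (simp add: Dval_def algebra_simps)
      have inner: "(2*of_nat n + 2*a + 2*b + 2) * (if n = 0 then 0 else wvec a b k N (n-1,m))
            + (2*a + 2*b + 2 - 2*of_nat m) * (if m = 0 then 0 else wvec a b k N (n, m-1))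
          = Dval l1 l2 a b (n,m) * Q a b (Suc n') k (Suc N)"
        unfolding Dv q2[folded Suc] EP[symmetric] using Suc True by (simp add: wvec_def algebra_simps NN)
      show ?thesis unfolding DeltaE_at inner using Dnz Suc True by (simp add: wvec_def)
    next
      case False
      then show ?thesis using Suc by (auto simp: DeltaE_at wvec_def)
    qed
  qed
qed

lemma wF:
  fixes a b :: complex
  assumes ab: "a + b \<notin> \<int>" and a: "\<forall>j::nat. a \<noteq> - (of_nat j + 1)" and kN: "k \<le> N"
  shows "DeltaF l1 l2 a b (wvec a b k N) =
              (if N = k then (\<lambda>p. 0)
               else (\<lambda>p. - of_nat (N - k) * wvec a b k (N - 1) p))"
proof (rule ext, clarify)
  fix n m
  have Dnz: "Dval l1 l2 a b (n,m) \<noteq> 0" by (rule Dval_nzB[OF ab])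
  show "DeltaF l1 l2 a b (wvec a b k N) (n,m) = (if N = k then (\<lambda>p. 0)
               else (\<lambda>p. - of_nat (N - k) * wvec a b k (N - 1) p)) (n,m)"
  proof (cases "Suc (n + m) = N")
    case True
    define M where "M = n + m"
    have NM: "N = Suc M" using True unfolding M_def by simp
    have nM: "n \<le> M" unfolding M_def by simp
    have mM: "(of_nat m :: complex) = of_nat M - of_nat n" unfolding M_def by simp
    have FP: "- (2*of_nat n + 2*a + 2) * (of_nat n + 1) * Q a b (Suc n) k N
         - (2*b - 2*(of_nat M - of_nat n)) * (of_nat M - of_nat n + 1) * Q a b n k N
       = - (2*(2*of_nat n - of_nat (Suc M) + a + b + 2)) * ((of_nat (Suc M) - of_nat k) * P a b n k M)"
      using F_P[OF kN[unfolded NM] nM a] kN NM by (simp add: Q_P)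
    have MM: "(of_nat M :: complex) = of_nat n + of_nat m" unfolding M_def by simp
    have Dv: "Dval l1 l2 a b (n,m) = 2*(2*of_nat n - of_nat (Suc M) + a + b + 2)"
      using MM by (simp add: Dval_def algebra_simps)
    have inner: "(2*of_nat n + 2*a + 2) * (- (of_nat n + 1) * wvec a b k N (Suc n,m))
         + (2*b - 2*of_nat m) * (- (of_nat m + 1) * wvec a b k N (n, Suc m))
       = - Dval l1 l2 a b (n,m) * ((of_nat (Suc M) - of_nat k) * P a b n k M)"
      unfolding Dv FP[symmetric] using True by (simp add: wvec_def algebra_simps MM)
    have lhs: "DeltaF l1 l2 a b (wvec a b k N) (n,m) = - ((of_nat (Suc M) - of_nat k) * P a b n k M)"
      unfolding DeltaF_at inner using Dnz by simp
    show ?thesis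
    proof (cases "N = k")
      case True
      then show ?thesis using lhs NM by simp
    next
      case False
      then have kM: "k \<le> M" using kN NM by simp
      have "wvec a b k (N - 1) (n,m) = P a b n k M" using NM Q_P[OF kM] unfolding M_def by (simp add: wvec_def)
      then show ?thesis using lhs False kN NM by (simp add: of_nat_diff algebra_simps)
    qed
  next
    case False
    have "DeltaF l1 l2 a b (wvec a b k N) (n,m) = 0"
      using False by (simp add: DeltaF_at wvec_def)
    moreover have "N \<noteq> k \<Longrightarrow> wvec a b k (N - 1) (n,m) = 0"
      using False kN by (auto simp: wvec_def)
    ultimately show ?thesis by simp
  qed
qed


theorem mainTheorem1:
  fixes l1 l2 a b :: complex
  assumes ab: "a + b \<notin> \<int>"
    and a: "\<forall>j::nat. a \<noteq> - (of_nat j + 1)"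
  shows "(\<forall>v::tvec. finite {p. v p \<noteq> 0} \<longrightarrow>
            commutator (DeltaH l1 l2) (DeltaE l1 l2 a b) v = (\<lambda>p. 2 * DeltaE l1 l2 a b v p)
          \<and> commutator (DeltaH l1 l2) (DeltaF l1 l2 a b) v = (\<lambda>p. - 2 * DeltaF l1 l2 a b v p)
          \<and> commutator (DeltaE l1 l2 a b) (DeltaF l1 l2 a b) v = v)
       \<and> (\<forall>k N::nat. k \<le> N \<longrightarrow>
            DeltaH l1 l2 (wvec a b k N) = (\<lambda>p. (l1 + l2 + 2 * of_nat N) * wvec a b k N p)
          \<and> DeltaE l1 l2 a b (wvec a b k N) = wvec a b k (N + 1)
          \<and> DeltaF l1 l2 a b (wvec a b k N) =
              (if N = k then (\<lambda>p. 0)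
               else (\<lambda>p. - of_nat (N - k) * wvec a b k (N - 1) p)))"
proof (intro conjI allI impI)
  fix v :: tvec
  show "commutator (DeltaH l1 l2) (DeltaE l1 l2 a b) v = (\<lambda>p. 2 * DeltaE l1 l2 a b v p)" by (rule commHE[OF ab])
  show "commutator (DeltaH l1 l2) (DeltaF l1 l2 a b) v = (\<lambda>p. - 2 * DeltaF l1 l2 a b v p)" by (rule commHF[OF ab])
  show "commutator (DeltaE l1 l2 a b) (DeltaF l1 l2 a b) v = v" by (rule commEF[OF ab])
next
  fix k N :: nat
  assume kN: "k \<le> N"
  show "DeltaH l1 l2 (wvec a b k N) = (\<lambda>p. (l1 + l2 + 2 * of_nat N) * wvec a b k N p)" by (rule wH)
  show "DeltaE l1 l2 a b (wvec a b k N) = wvec a b k (N + 1)" by (rule wE[OF ab kN])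
  show "DeltaF l1 l2 a b (wvec a b k N) =
              (if N = k then (\<lambda>p. 0)
               else (\<lambda>p. - of_nat (N - k) * wvec a b k (N - 1) p))" by (rule wF[OF ab a kN])
qed

end
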